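(* For every $\varepsilon\in(0,1]$ there exists $b_0$ such that for every $b\geq b_0$ there exists $\gamma_0>0$ such that for every $\gamma\in(0,\gamma_0]$ there exists $n_0$ such that for every $n\geq n_0$ the following holds. Let $\Delta:=e^{\gamma\sqrt{\ln n}}$, let $G$ be an $(n,\varepsilon)$-digraph, let $\mathbf{x}$ be a $b$-normal perfect fractional matching of $G$, and let $v_0\in V(G)$. Let $Q=(r_0,\ldots,r_m)$ be an oriented tree with $n^{1/4}+1\leq|Q|\leq3\Delta n^{1/4}$ and $\Delta(Q)\leq\Delta$, and let $R=(R_0,\ldots,R_m)$ be a random tree in $G$ according to $Q$ and $\mathbf{x}$ with $R_0=v_0$. Then $H(R)\geq(1-2e^{-\sqrt{\ln n}})\frac mnh(\mathbf{x})$.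
   Context: $\log=\log_2$, $\ln$ natural logarithm. $H(R)=-\sum_r\mathbb{P}[R=r]\log\mathbb{P}[R=r]$ is the entropy of the random vector $R$. Digraphs have no loops and at most one edge from $v$ to $w$ per ordered pair. An $(n,\varepsilon)$-digraph is a digraph on $n$ vertices with every in- and out-degree at least $(\frac12+\varepsilon)n$. A perfect fractional matching of $G$ is $\mathbf{x}\colon E(G)\to\mathbb{R}_{\geq0}$ with $\sum_{w\in N^+(v)}\mathbf{x}_{vw}=1=\sum_{w\in N^-(v)}\mathbf{x}_{wv}$ for all $v$; it is $b$-normal if $\frac1{bn}\leq\mathbf{x}_e\leq\frac bn$ for all $e$; $h(\mathbf{x})=\sum_e\mathbf{x}_e\log\frac1{\mathbf{x}_e}$. $Q=(r_0,\ldots,r_m)$ is $Q$ rooted at $r_0$ with a breadth-first ordering; $\Delta(Q)$ is the max degree of the underlying tree. A random tree according to $Q$ and $\mathbf{x}$ with $R_0=v_0$ is a random vector $R=(R_0,\dots,R_m)$ with $R_0=v_0$ and, for each $j\geq1$ with parent $r_i$ of $r_j$, conditionally on $R_i=v$ and on the values of all $R_{i'}$ with $r_{i'}$ not a descendant of $r_j$ and $i'\neq i$, $R_j=w$ with probability $\mathbf{x}_{vw}$ if $r_ir_j\in E(Q)$, $vw\in E(G)$; $\mathbf{x}_{wv}$ if $r_jr_i\in E(Q)$, $wv\in E(G)$; $0$ otherwise. *)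

theory Defs
  imports "HOL-Probability.Probability"
begin

definition digraph :: "nat set \<Rightarrow> (nat \<times> nat) set \<Rightarrow> bool" where
  "digraph V E \<longleftrightarrow> finite V \<and> E \<subseteq> V \<times> V \<and> (\<forall>v. (v, v) \<notin> E)"

definition out_nbrs :: "nat set \<Rightarrow> (nat \<times> nat) set \<Rightarrow> nat \<Rightarrow> nat set" where
  "out_nbrs V E v = {w \<in> V. (v, w) \<in> E}"

definition in_nbrs :: "nat set \<Rightarrow> (nat \<times> nat) set \<Rightarrow> nat \<Rightarrow> nat set" where
  "in_nbrs V E v = {w \<in> V. (w, v) \<in> E}"

definition n_eps_digraph :: "nat \<Rightarrow> real \<Rightarrow> nat set \<Rightarrow> (nat \<times> nat) set \<Rightarrow> bool" where
  "n_eps_digraph n \<epsilon> V E \<longleftrightarrow> digraph V E \<and> card V = n \<and>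
     (\<forall>v\<in>V. real (card (out_nbrs V E v)) \<ge> (1/2 + \<epsilon>) * real n \<and>
             real (card (in_nbrs V E v)) \<ge> (1/2 + \<epsilon>) * real n)"

definition perfect_frac_matching ::
  "nat set \<Rightarrow> (nat \<times> nat) set \<Rightarrow> (nat \<times> nat \<Rightarrow> real) \<Rightarrow> bool" where
  "perfect_frac_matching V E x \<longleftrightarrow> (\<forall>e\<in>E. x e \<ge> 0) \<and>
     (\<forall>v\<in>V. (\<Sum>w\<in>out_nbrs V E v. x (v, w)) = 1 \<and> (\<Sum>w\<in>in_nbrs V E v. x (w, v)) = 1)"

definition b_normal :: "real \<Rightarrow> nat \<Rightarrow> (nat \<times> nat) set \<Rightarrow> (nat \<times> nat \<Rightarrow> real) \<Rightarrow> bool" where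
  "b_normal b n E x \<longleftrightarrow> (\<forall>e\<in>E. 1 / (b * real n) \<le> x e \<and> x e \<le> b / real n)"

definition h_frac :: "(nat \<times> nat) set \<Rightarrow> (nat \<times> nat \<Rightarrow> real) \<Rightarrow> real" where
  "h_frac E x = (\<Sum>e\<in>E. x e * log 2 (1 / x e))"

text \<open>An oriented tree Q = (r_0,...,r_m) rooted at r_0 in breadth-first order is encoded by the
  parent map par (par j < j for 1 \<le> j \<le> m, par nondecreasing on {1..m}: breadth-first order)
  and orientations dir: dir j means the edge r_{par j} r_j of Q is oriented from the parent to
  r_j; otherwise it is r_j r_{par j}.\<close>

definition bfs_tree :: "nat \<Rightarrow> (nat \<Rightarrow> nat) \<Rightarrow> bool" where
  "bfs_tree m par \<longleftrightarrow> (\<forall>j\<in>{1..m}. par j < j) \<and>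
     (\<forall>j\<in>{1..m}. \<forall>k\<in>{1..m}. j \<le> k \<longrightarrow> par j \<le> par k)"

definition tree_deg :: "nat \<Rightarrow> (nat \<Rightarrow> nat) \<Rightarrow> nat \<Rightarrow> nat" where
  "tree_deg m par i = card {j\<in>{1..m}. par j = i} + (if i = 0 then 0 else 1)"

definition tree_maxdeg :: "nat \<Rightarrow> (nat \<Rightarrow> nat) \<Rightarrow> nat" where
  "tree_maxdeg m par = Max (tree_deg m par ` {0..m})"

definition descendant :: "(nat \<Rightarrow> nat) \<Rightarrow> nat \<Rightarrow> nat \<Rightarrow> bool" where
  "descendant par j i \<longleftrightarrow> (\<exists>k. (par ^^ k) i = j)"

definition tree_trans ::
  "(nat \<times> nat) set \<Rightarrow> (nat \<times> nat \<Rightarrow> real) \<Rightarrow> (nat \<Rightarrow> bool) \<Rightarrow> nat \<Rightarrow> nat \<Rightarrow> nat \<Rightarrow> real" where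
  "tree_trans E x dir j v w =
     (if dir j then (if (v, w) \<in> E then x (v, w) else 0)
      else (if (w, v) \<in> E then x (w, v) else 0))"

text \<open>R is a random vector (R_0,...,R_m), modelled as a pmf on lists of length m+1.
  It is a random tree according to Q and x with R_0 = v0 if R_0 = v0 almost surely and,
  for every j in {1..m}, conditionally on any (positive-probability) assignment of the values
  of all R_i' with r_i' not a descendant of r_j (this includes the parent), R_j = w with the
  prescribed probability.\<close>
definition random_tree ::
  "(nat \<times> nat) set \<Rightarrow> (nat \<times> nat \<Rightarrow> real) \<Rightarrow> nat \<Rightarrow> (nat \<Rightarrow> nat) \<Rightarrow> (nat \<Rightarrow> bool) \<Rightarrow> nat
     \<Rightarrow> nat list pmf \<Rightarrow> bool" where
  "random_tree E x m par dir v0 R \<longleftrightarrow>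
     (\<forall>r\<in>set_pmf R. length r = m + 1) \<and>
     measure_pmf.prob R {r. r ! 0 = v0} = 1 \<and>
     (\<forall>j\<in>{1..m}. \<forall>a :: nat \<Rightarrow> nat. \<forall>w.
        let N = {i\<in>{0..m}. \<not> descendant par j i};
            B = {r. \<forall>i\<in>N. r ! i = a i}
        in measure_pmf.prob R B > 0 \<longrightarrow>
           measure_pmf.prob R (B \<inter> {r. r ! j = w}) / measure_pmf.prob R B
             = tree_trans E x dir j (a (par j)) w)"

definition entropy2 :: "'b pmf \<Rightarrow> real" where
  "entropy2 R = - (\<Sum>r\<in>set_pmf R. pmf R r * log 2 (pmf R r))"

end

theory Submission
  imports Defs
begin


locale rtree =
  fixes V :: "nat set" and E :: "(nat \<times> nat) set" and x :: "nat \<times> nat \<Rightarrow> real"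
    and m :: nat and par :: "nat \<Rightarrow> nat" and dir :: "nat \<Rightarrow> bool" and v0 :: nat
    and R :: "nat list pmf"
  assumes rt: "random_tree E x m par dir v0 R"
  and EV: "E \<subseteq> V \<times> V" and finV: "finite V" and v0V: "v0 \<in> V"
  and parlt: "\<forall>j\<in>{1..m}. par j < j"
begin

definition tt where "tt j = tree_trans E x dir j"
definition NN where "NN j = {i\<in>{0..m}. \<not> descendant par j i}"
definition Pr where "Pr A = (\<Sum>r\<in>set_pmf R \<inter> A. pmf R r)"

lemma prob_ge_pmf: "r \<in> A \<Longrightarrow> pmf R r \<le> measure_pmf.prob R A"
  using measure_pmf.finite_measure_mono[of "{r}" A R] by (simp add: measure_pmf_single)

lemma len: "r \<in> set_pmf R \<Longrightarrow> length r = m + 1"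
  using rt unfolding random_tree_def by auto

lemma r0: "r \<in> set_pmf R \<Longrightarrow> r ! 0 = v0"
proof -
  assume r: "r \<in> set_pmf R"
  have "measure_pmf.prob R {r. r ! 0 = v0} = 1" using rt unfolding random_tree_def by auto
  then have "AE r in R. r ! 0 = v0" by (subst (asm) measure_pmf.prob_eq_1) auto
  then show ?thesis using r by (simp add: AE_measure_pmf_iff)
qed

lemma cond0:
  assumes "j \<in> {1..m}" "measure_pmf.prob R {r. \<forall>i\<in>NN j. r ! i = a i} > 0"
  shows "measure_pmf.prob R ({r. \<forall>i\<in>NN j. r ! i = a i} \<inter> {r. r ! j = w})
          / measure_pmf.prob R {r. \<forall>i\<in>NN j. r ! i = a i} = tt j (a (par j)) w"
proof -
  note H = conjunct2[OF conjunct2[OF rt[unfolded random_tree_def]]]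
  show ?thesis using H[rule_format, OF assms(1), of a w] assms(2) unfolding Let_def NN_def tt_def
    by simp
qed

lemma tt_pos:
  assumes r: "r \<in> set_pmf R" and j: "j \<in> {1..m}"
  shows "tt j (r ! par j) (r ! j) > 0"
proof -
  let ?B = "{r'. \<forall>i\<in>NN j. r' ! i = r ! i}"
  have "pmf R r > 0" using r by (simp add: pmf_positive)
  moreover have "pmf R r \<le> measure_pmf.prob R ?B" by (rule prob_ge_pmf) simp
  moreover have "pmf R r \<le> measure_pmf.prob R (?B \<inter> {r'. r' ! j = r ! j})" by (rule prob_ge_pmf) simp
  ultimately have p1: "measure_pmf.prob R ?B > 0"
    and p2: "measure_pmf.prob R (?B \<inter> {r'. r' ! j = r ! j}) > 0" by linarith+
  have "measure_pmf.prob R (?B \<inter> {r'. r' ! j = r ! j}) / measure_pmf.prob R ?B > 0"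
    using p1 p2 by (rule divide_pos_pos[rotated])
  then show ?thesis using cond0[OF j, of "\<lambda>i. r ! i" "r ! j"] p1 by simp
qed

lemma tt_nz: "tt j u w \<noteq> 0 \<Longrightarrow> u \<in> V \<and> w \<in> V"
  using EV unfolding tt_def tree_trans_def by (auto split: if_splits)

lemma entries: "r \<in> set_pmf R \<Longrightarrow> i \<le> m \<Longrightarrow> r ! i \<in> V"
proof -
  assume r: "r \<in> set_pmf R" and i: "i \<le> m"
  show ?thesis
  proof (cases "i = 0")
    case True then show ?thesis using r0[OF r] v0V by simp
  next
    case False
    then have "i \<in> {1..m}" using i by auto
    from tt_pos[OF r this] show ?thesis using tt_nz[of i "r ! par i" "r ! i"] by force
  qed
qed

lemma finS: "finite (set_pmf R)"
proof -
  have "set_pmf R \<subseteq> {r. set r \<subseteq> V \<and> length r = m + 1}"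
  proof
    fix r assume r: "r \<in> set_pmf R"
    show "r \<in> {r. set r \<subseteq> V \<and> length r = m + 1}"
      using entries[OF r] len[OF r] by (auto simp: in_set_conv_nth)
  qed
  then show ?thesis by (rule finite_subset) (simp add: finite_lists_length_eq finV)
qed

lemma prob_Pr: "measure_pmf.prob R A = Pr A"
proof -
  have "measure_pmf.prob R A = measure_pmf.prob R (A \<inter> set_pmf R)" by (simp add: measure_Int_set_pmf)
  also have "\<dots> = Pr A" unfolding Pr_def
    by (subst measure_measure_pmf_finite) (auto simp: finS Int_commute)
  finally show ?thesis .
qed

lemma Pr_ge: "r \<in> set_pmf R \<Longrightarrow> r \<in> A \<Longrightarrow> pmf R r \<le> Pr A"
  using prob_ge_pmf prob_Pr by metis

lemma cond:
  assumes "j \<in> {1..m}" "Pr {r. \<forall>i\<in>NN j. r ! i = a i} > 0"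
  shows "Pr ({r. \<forall>i\<in>NN j. r ! i = a i} \<inter> {r. r ! j = w})
          = tt j (a (par j)) w * Pr {r. \<forall>i\<in>NN j. r ! i = a i}"
  using cond0[of j a w] assms by (simp add: prob_Pr field_simps)

lemma Pr_all: "Pr UNIV = 1"
  unfolding Pr_def using sum_pmf_eq_1[OF finS, of R] by simp

end



context rtree begin

lemma reach0: "i \<le> m \<Longrightarrow> \<exists>t. (par ^^ t) i = 0"
proof (induction i rule: less_induct)
  case (less i)
  show ?case
  proof (cases "i = 0")
    case True then show ?thesis by (intro exI[of _ 0]) simp
  next
    case False
    then have "par i < i" using parlt less.prems by auto
    then obtain t where "(par ^^ t) (par i) = 0" using less.IH[of "par i"] less.prems by auto
    then have "(par ^^ Suc t) i = 0" by (simp add: funpow_Suc_right del: funpow.simps)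
    then show ?thesis by blast
  qed
qed

lemma desc_lt: "(par ^^ t) i = j \<Longrightarrow> i < j \<Longrightarrow> j \<le> m \<Longrightarrow> \<exists>t'. (par ^^ t') 0 = j"
proof (induction t arbitrary: i)
  case 0 then show ?case by simp
next
  case (Suc t)
  show ?case
  proof (cases "i = 0")
    case True then show ?thesis using Suc.prems by blast
  next
    case False
    then have "par i < i" using parlt Suc.prems by auto
    moreover have "(par ^^ t) (par i) = j" using Suc.prems(1)
      by (simp add: funpow_Suc_right del: funpow.simps)
    ultimately show ?thesis using Suc.IH Suc.prems by auto
  qed
qed

lemma par_in_NN: assumes j: "j \<in> {1..m}" shows "par j \<in> NN j"
proof (rule ccontr)
  assume nin: "par j \<notin> NN j"
  obtain r where r: "r \<in> set_pmf R" using set_pmf_not_empty by fastforce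
  obtain v where v: "v \<notin> V" using ex_new_if_finite[OF infinite_UNIV_nat finV] by blast
  define a where "a = (\<lambda>i. if i = par j then v else r ! i)"
  have Beq: "{r'. \<forall>i\<in>NN j. r' ! i = a i} = {r'. \<forall>i\<in>NN j. r' ! i = r ! i}"
    using nin unfolding a_def by auto
  have pr: "pmf R r > 0" using r by (simp add: pmf_positive)
  have "pmf R r \<le> Pr {r'. \<forall>i\<in>NN j. r' ! i = a i}" unfolding Beq by (rule Pr_ge[OF r]) simp
  then have pos: "Pr {r'. \<forall>i\<in>NN j. r' ! i = a i} > 0" using pr by linarith
  have "pmf R r \<le> Pr ({r'. \<forall>i\<in>NN j. r' ! i = a i} \<inter> {r'. r' ! j = r ! j})"
    unfolding Beq by (rule Pr_ge[OF r]) simp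
  moreover have "tt j (a (par j)) (r ! j) = 0" using tt_nz[of j v "r ! j"] v unfolding a_def by auto
  ultimately show False using cond[OF j pos, of "r ! j"] pr by simp
qed

lemma lt_in_NN: assumes j: "j \<in> {1..m}" and i: "i < j" shows "i \<in> NN j"
proof (rule ccontr)
  assume "i \<notin> NN j"
  then obtain t where t: "(par ^^ t) i = j" using i j unfolding NN_def descendant_def by auto
  obtain t' where t': "(par ^^ t') 0 = j" using desc_lt[OF t i] j by auto
  have "par j < j" using parlt j by auto
  then obtain t1 where t1: "(par ^^ t1) (par j) = 0" using reach0[of "par j"] j by auto
  have "(par ^^ (t' + t1)) (par j) = j" by (simp add: funpow_add t1 t')
  then have "descendant par j (par j)" unfolding descendant_def by blast
  then show False using par_in_NN[OF j] unfolding NN_def by auto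
qed

lemma group_sum:
  fixes h :: "nat list \<Rightarrow> real"
  assumes det: "\<forall>r\<in>set_pmf R. \<forall>r'\<in>set_pmf R. r \<in> C \<longrightarrow> (\<forall>i\<in>NN j. r' ! i = r ! i) \<longrightarrow> r' \<in> C"
  shows "(\<Sum>r\<in>set_pmf R \<inter> C. h r) =
    (\<Sum>a\<in>(\<lambda>r i. if i \<in> NN j then r ! i else 0) ` (set_pmf R \<inter> C).
        \<Sum>r\<in>set_pmf R \<inter> {r. \<forall>i\<in>NN j. r ! i = a i}. h r)"
proof -
  define f where "f = (\<lambda>r i. if i \<in> NN j then r ! i else (0::nat))"
  have fin: "finite (set_pmf R \<inter> C)" using finS by auto
  have "(\<Sum>r\<in>set_pmf R \<inter> C. h r) = (\<Sum>a\<in>f ` (set_pmf R \<inter> C). \<Sum>r\<in>{r. r \<in> set_pmf R \<inter> C \<and> f r = a}. h r)"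
    by (rule sum.group[symmetric]) (use fin in auto)
  also have "\<dots> = (\<Sum>a\<in>f ` (set_pmf R \<inter> C). \<Sum>r\<in>set_pmf R \<inter> {r. \<forall>i\<in>NN j. r ! i = a i}. h r)"
  proof (rule sum.cong[OF refl])
    fix a assume "a \<in> f ` (set_pmf R \<inter> C)"
    then obtain r0 where r0: "r0 \<in> set_pmf R" "r0 \<in> C" and a: "a = f r0" by auto
    have "{r. r \<in> set_pmf R \<inter> C \<and> f r = a} = set_pmf R \<inter> {r. \<forall>i\<in>NN j. r ! i = a i}"
    proof (intro set_eqI iffI)
      fix r assume "r \<in> {r. r \<in> set_pmf R \<inter> C \<and> f r = a}"
      then have rS: "r \<in> set_pmf R" and fe: "f r = f r0" using a by auto
      have "\<forall>i\<in>NN j. r ! i = a i"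
      proof
        fix i assume i: "i \<in> NN j"
        from fun_cong[OF fe, of i] i show "r ! i = a i" unfolding a f_def by simp
      qed
      then show "r \<in> set_pmf R \<inter> {r. \<forall>i\<in>NN j. r ! i = a i}" using rS by auto
    next
      fix r assume rr: "r \<in> set_pmf R \<inter> {r. \<forall>i\<in>NN j. r ! i = a i}"
      then have agree: "\<forall>i\<in>NN j. r ! i = r0 ! i" unfolding a f_def by auto
      then have "r \<in> C" using det r0 rr by blast
      moreover have "f r = a" unfolding a f_def using agree by auto
      ultimately show "r \<in> {r. r \<in> set_pmf R \<inter> C \<and> f r = a}" using rr by auto
    qed
    then show "(\<Sum>r\<in>{r. r \<in> set_pmf R \<inter> C \<and> f r = a}. h r) =
      (\<Sum>r\<in>set_pmf R \<inter> {r. \<forall>i\<in>NN j. r ! i = a i}. h r)" by simp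
  qed
  finally show ?thesis unfolding f_def .
qed

lemma lemA:
  assumes j: "j \<in> {1..m}"
  and det: "\<forall>r\<in>set_pmf R. \<forall>r'\<in>set_pmf R. r \<in> C \<longrightarrow> (\<forall>i\<in>NN j. r' ! i = r ! i) \<longrightarrow> r' \<in> C"
  and uC: "\<forall>r\<in>C \<inter> set_pmf R. r ! par j = u"
  shows "Pr (C \<inter> {r. r ! j = w}) = tt j u w * Pr C"
proof -
  define f where "f = (\<lambda>r i. if i \<in> NN j then r ! i else (0::nat))"
  let ?B = "\<lambda>a. {r. \<forall>i\<in>NN j. r ! i = a i}"
  let ?g = "\<lambda>r. if r ! j = w then pmf R r else 0"
  have fin: "finite (set_pmf R \<inter> C)" using finS by auto
  have "Pr (C \<inter> {r. r ! j = w}) = (\<Sum>r\<in>set_pmf R \<inter> C. ?g r)"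
    unfolding Pr_def by (rule sum.mono_neutral_cong_left) (use fin in auto)
  also have "\<dots> = (\<Sum>a\<in>f ` (set_pmf R \<inter> C). \<Sum>r\<in>set_pmf R \<inter> ?B a. ?g r)"
    unfolding f_def by (rule group_sum[OF det])
  also have "\<dots> = (\<Sum>a\<in>f ` (set_pmf R \<inter> C). tt j u w * Pr (?B a))"
  proof (rule sum.cong[OF refl])
    fix a assume "a \<in> f ` (set_pmf R \<inter> C)"
    then obtain r0 where r0: "r0 \<in> set_pmf R" "r0 \<in> C" and a: "a = f r0" by auto
    have r0B: "r0 \<in> ?B a" unfolding a f_def by auto
    have "pmf R r0 \<le> Pr (?B a)" by (rule Pr_ge[OF r0(1) r0B])
    then have pos: "Pr (?B a) > 0" using pmf_positive[OF r0(1)] by linarith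
    have apj: "a (par j) = u" using par_in_NN[OF j] uC r0 unfolding a f_def by auto
    have "(\<Sum>r\<in>set_pmf R \<inter> ?B a. ?g r) = Pr (?B a \<inter> {r. r ! j = w})"
      unfolding Pr_def by (rule sum.mono_neutral_cong_right) (use finS in auto)
    also have "\<dots> = tt j u w * Pr (?B a)" using cond[OF j pos, of w] apj by simp
    finally show "(\<Sum>r\<in>set_pmf R \<inter> ?B a. ?g r) = tt j u w * Pr (?B a)" .
  qed
  also have "\<dots> = tt j u w * (\<Sum>a\<in>f ` (set_pmf R \<inter> C). \<Sum>r\<in>set_pmf R \<inter> ?B a. pmf R r)"
    unfolding Pr_def by (simp add: sum_distrib_left)
  also have "(\<Sum>a\<in>f ` (set_pmf R \<inter> C). \<Sum>r\<in>set_pmf R \<inter> ?B a. pmf R r) = Pr C"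
    unfolding Pr_def f_def by (rule group_sum[OF det, symmetric])
  finally show ?thesis .
qed

end



context rtree begin

definition mu where "mu i w = Pr {r. r ! i = w}"

lemma Pr_cong: "set_pmf R \<inter> A = set_pmf R \<inter> B \<Longrightarrow> Pr A = Pr B"
  unfolding Pr_def by simp

lemma Pr_nonneg: "Pr A \<ge> 0"
  unfolding Pr_def by (simp add: sum_nonneg)

lemma prefix:
  assumes r: "r \<in> set_pmf R"
  shows "1 \<le> k \<Longrightarrow> k \<le> m + 1 \<Longrightarrow>
    Pr {r'. take k r' = take k r} = (\<Prod>i\<in>{1..<k}. tt i (r ! par i) (r ! i))"
proof (induction k)
  case 0 then show ?case by simp
next
  case (Suc k)
  show ?case
  proof (cases "k = 0")
    case True
    have t1: "take 1 r' = [r' ! 0]" if "r' \<in> set_pmf R" for r'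
      using len[OF that] by (cases r') auto
    have "set_pmf R \<inter> {r'. take (Suc k) r' = take (Suc k) r} = set_pmf R \<inter> UNIV"
      using True t1 t1[OF r] r0 r by auto
    then have "Pr {r'. take (Suc k) r' = take (Suc k) r} = Pr UNIV" by (rule Pr_cong)
    then show ?thesis using True Pr_all by simp
  next
    case False
    then have k: "k \<in> {1..m}" using Suc.prems by auto
    let ?C = "{r'. take k r' = take k r}"
    have tS: "take (Suc k) r' = take k r' @ [r' ! k]" if "r' \<in> set_pmf R" for r'
      using len[OF that] k by (simp add: take_Suc_conv_app_nth)
    have "set_pmf R \<inter> {r'. take (Suc k) r' = take (Suc k) r} = set_pmf R \<inter> (?C \<inter> {r'. r' ! k = r ! k})"
      using tS tS[OF r] r by auto
    then have "Pr {r'. take (Suc k) r' = take (Suc k) r} = Pr (?C \<inter> {r'. r' ! k = r ! k})"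
      by (rule Pr_cong)
    also have "\<dots> = tt k (r ! par k) (r ! k) * Pr ?C"
    proof (rule lemA[OF k])
      show "\<forall>r1\<in>set_pmf R. \<forall>r'\<in>set_pmf R. r1 \<in> ?C \<longrightarrow> (\<forall>i\<in>NN k. r' ! i = r1 ! i) \<longrightarrow> r' \<in> ?C"
      proof (intro ballI impI)
        fix r1 r' assume r1: "r1 \<in> set_pmf R" and r': "r' \<in> set_pmf R" and c: "r1 \<in> ?C"
          and ag: "\<forall>i\<in>NN k. r' ! i = r1 ! i"
        have "take k r' = take k r1"
          by (rule nth_take_lemma) (use len[OF r1] len[OF r'] k ag lt_in_NN[OF k] in auto)
        then show "r' \<in> ?C" using c by simp
      qed
      show "\<forall>r1\<in>?C \<inter> set_pmf R. r1 ! par k = r ! par k"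
      proof
        fix r1 assume "r1 \<in> ?C \<inter> set_pmf R"
        then have "take k r1 ! par k = take k r ! par k" by simp
        moreover have "par k < k" using parlt k by auto
        ultimately show "r1 ! par k = r ! par k" by simp
      qed
    qed
    also have "\<dots> = (\<Prod>i\<in>{1..<Suc k}. tt i (r ! par i) (r ! i))"
      using Suc.IH k by (simp add: prod.op_ivl_Suc)
    finally show ?thesis .
  qed
qed

lemma pmf_prod:
  assumes r: "r \<in> set_pmf R"
  shows "pmf R r = (\<Prod>i\<in>{1..m}. tt i (r ! par i) (r ! i))"
proof -
  have "set_pmf R \<inter> {r'. take (m+1) r' = take (m+1) r} = set_pmf R \<inter> {r}"
    using len r by auto
  then have "Pr {r'. take (m+1) r' = take (m+1) r} = pmf R r"
    using Pr_cong[of "{r'. take (m+1) r' = take (m+1) r}" "{r}"] r unfolding Pr_def by auto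
  moreover have "{1..<m+1} = {1..m}" by auto
  ultimately show ?thesis using prefix[OF r, of "m+1"] by simp
qed

lemma log_pmf:
  assumes r: "r \<in> set_pmf R"
  shows "log 2 (pmf R r) = (\<Sum>i\<in>{1..m}. log 2 (tt i (r ! par i) (r ! i)))"
proof -
  have nz: "\<And>i. i \<in> {1..m} \<Longrightarrow> tt i (r ! par i) (r ! i) \<noteq> 0" using tt_pos[OF r] by force
  have "log 2 (pmf R r) = ln (\<Prod>i\<in>{1..m}. tt i (r ! par i) (r ! i)) / ln 2"
    by (simp add: pmf_prod[OF r] log_def)
  also have "\<dots> = (\<Sum>i\<in>{1..m}. ln (tt i (r ! par i) (r ! i))) / ln 2"
    by (subst ln_prod) (use nz in auto)
  also have "\<dots> = (\<Sum>i\<in>{1..m}. log 2 (tt i (r ! par i) (r ! i)))"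
    by (simp add: log_def sum_divide_distrib)
  finally show ?thesis .
qed

lemma entropy_decomp:
  "entropy2 R = (\<Sum>i\<in>{1..m}. \<Sum>r\<in>set_pmf R. pmf R r * (- log 2 (tt i (r ! par i) (r ! i))))"
proof -
  have "entropy2 R = (\<Sum>r\<in>set_pmf R. \<Sum>i\<in>{1..m}. pmf R r * (- log 2 (tt i (r ! par i) (r ! i))))"
    unfolding entropy2_def
    by (simp add: log_pmf sum_distrib_left sum_negf flip: sum_negf)
  also have "\<dots> = (\<Sum>i\<in>{1..m}. \<Sum>r\<in>set_pmf R. pmf R r * (- log 2 (tt i (r ! par i) (r ! i))))"
    by (rule sum.swap)
  finally show ?thesis .
qed

lemma lemB:
  assumes k: "k \<in> {1..m}"
  shows "(\<Sum>r\<in>set_pmf R. pmf R r * \<phi> (r ! par k) (r ! k)) =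
    (\<Sum>u\<in>V. mu (par k) u * (\<Sum>w\<in>V. tt k u w * \<phi> u w))"
proof -
  have "par k < k" using parlt k by blast
  then have pk: "par k \<le> m" "k \<le> m" using k by auto
  let ?h = "\<lambda>r. pmf R r * \<phi> (r ! par k) (r ! k)"
  have "(\<Sum>r\<in>set_pmf R. ?h r) = (\<Sum>u\<in>V. \<Sum>r\<in>{r. r \<in> set_pmf R \<and> r ! par k = u}. ?h r)"
    by (rule sum.group[symmetric]) (use finS finV entries pk in auto)
  also have "\<dots> = (\<Sum>u\<in>V. \<Sum>w\<in>V. \<Sum>r\<in>{r. r \<in> {r. r \<in> set_pmf R \<and> r ! par k = u} \<and> r ! k = w}. ?h r)"
    by (rule sum.cong[OF refl], rule sum.group[symmetric]) (use finS finV entries pk in auto)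
  also have "\<dots> = (\<Sum>u\<in>V. \<Sum>w\<in>V. \<phi> u w * (tt k u w * mu (par k) u))"
  proof (intro sum.cong refl)
    fix u w
    have "(\<Sum>r\<in>{r. r \<in> {r. r \<in> set_pmf R \<and> r ! par k = u} \<and> r ! k = w}. ?h r)
        = (\<Sum>r\<in>set_pmf R \<inter> ({r. r ! par k = u} \<inter> {r. r ! k = w}). \<phi> u w * pmf R r)"
      by (rule sum.cong) auto
    also have "\<dots> = \<phi> u w * Pr ({r. r ! par k = u} \<inter> {r. r ! k = w})"
      unfolding Pr_def by (simp add: sum_distrib_left)
    also have "Pr ({r. r ! par k = u} \<inter> {r. r ! k = w}) = tt k u w * mu (par k) u"
      unfolding mu_def
      by (rule lemA[OF k]) (use par_in_NN[OF k] in auto)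
    finally show "(\<Sum>r\<in>{r. r \<in> {r. r \<in> set_pmf R \<and> r ! par k = u} \<and> r ! k = w}. ?h r)
        = \<phi> u w * (tt k u w * mu (par k) u)" .
  qed
  also have "\<dots> = (\<Sum>u\<in>V. mu (par k) u * (\<Sum>w\<in>V. tt k u w * \<phi> u w))"
    by (simp add: sum_distrib_left mult_ac)
  finally show ?thesis .
qed

lemma mu_nonneg: "mu i w \<ge> 0"
  unfolding mu_def by (rule Pr_nonneg)

lemma mu_sum: assumes i: "i \<le> m" shows "(\<Sum>u\<in>V. mu i u) = 1"
proof -
  have "(\<Sum>u\<in>V. mu i u) = (\<Sum>u\<in>V. \<Sum>r\<in>{r. r \<in> set_pmf R \<and> r ! i = u}. pmf R r)"
    unfolding mu_def Pr_def by (intro sum.cong refl) auto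
  also have "\<dots> = (\<Sum>r\<in>set_pmf R. pmf R r)"
    by (rule sum.group) (use finS finV entries i in auto)
  also have "\<dots> = 1" using Pr_all unfolding Pr_def by simp
  finally show ?thesis .
qed

lemma marginal:
  assumes k: "k \<in> {1..m}" and w: "w \<in> V"
  shows "mu k w = (\<Sum>u\<in>V. mu (par k) u * tt k u w)"
proof -
  have "mu k w = (\<Sum>r\<in>set_pmf R. pmf R r * (\<lambda>u w'. if w' = w then 1 else 0) (r ! par k) (r ! k))"
    unfolding mu_def Pr_def by (rule sum.mono_neutral_cong_left) (use finS in auto)
  also have "\<dots> = (\<Sum>u\<in>V. mu (par k) u * (\<Sum>w'\<in>V. tt k u w' * (if w' = w then 1 else 0)))"
    by (rule lemB[OF k])
  also have "\<dots> = (\<Sum>u\<in>V. mu (par k) u * tt k u w)"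
    using w finV by (simp add: if_distrib cong: if_cong)
  finally show ?thesis .
qed

end



lemma dobrushin:
  fixes \<mu> :: "nat \<Rightarrow> real" and t :: "nat \<Rightarrow> nat \<Rightarrow> real"
  assumes fin: "finite V" and ne: "V \<noteq> {}"
    and osc: "\<forall>u\<in>V. \<forall>v\<in>V. \<mu> u - \<mu> v \<le> Ob"
    and tnn: "\<And>u w. t u w \<ge> 0"
    and s1: "(\<Sum>u\<in>V. t u w) = 1" and s2: "(\<Sum>u\<in>V. t u w') = 1"
    and cm: "(\<Sum>u\<in>V. min (t u w) (t u w')) \<ge> c"
  shows "(\<Sum>u\<in>V. \<mu> u * t u w) - (\<Sum>u\<in>V. \<mu> u * t u w') \<le> Ob * (1 - c)"
proof -
  define M where "M = Max (\<mu> ` V)"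
  define mn where "mn = Min (\<mu> ` V)"
  define s where "s = (\<lambda>u. min (t u w) (t u w'))"
  define \<Sigma> where "\<Sigma> = (\<Sum>u\<in>V. s u)"
  have Mge: "\<mu> u \<le> M" if "u \<in> V" for u unfolding M_def using fin that by simp
  have mnle: "mn \<le> \<mu> u" if "u \<in> V" for u unfolding mn_def using fin that by simp
  have "M \<in> \<mu> ` V" unfolding M_def using fin ne by (intro Max_in) auto
  then obtain a where a: "a \<in> V" "M = \<mu> a" by blast
  have "mn \<in> \<mu> ` V" unfolding mn_def using fin ne by (intro Min_in) auto
  then obtain b where b: "b \<in> V" "mn = \<mu> b" by blast
  have Mmn: "M - mn \<le> Ob" using osc a b by blast
  have "\<mu> a - \<mu> a \<le> Ob" using osc a by blast
  then have O0: "Ob \<ge> 0" by simp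
  have sw: "s u \<le> t u w" "s u \<le> t u w'" for u unfolding s_def by auto
  have "\<Sigma> \<le> (\<Sum>u\<in>V. t u w)" unfolding \<Sigma>_def by (rule sum_mono) (rule sw)
  then have S1: "1 - \<Sigma> \<ge> 0" using s1 by simp
  have e1: "(\<Sum>u\<in>V. \<mu> u * t u w) = (\<Sum>u\<in>V. \<mu> u * s u) + (\<Sum>u\<in>V. \<mu> u * (t u w - s u))"
    unfolding sum.distrib[symmetric] by (rule sum.cong) (auto simp: algebra_simps)
  have e2: "(\<Sum>u\<in>V. \<mu> u * t u w') = (\<Sum>u\<in>V. \<mu> u * s u) + (\<Sum>u\<in>V. \<mu> u * (t u w' - s u))"
    unfolding sum.distrib[symmetric] by (rule sum.cong) (auto simp: algebra_simps)
  have i1: "(\<Sum>u\<in>V. \<mu> u * (t u w - s u)) \<le> (\<Sum>u\<in>V. M * (t u w - s u))"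
    by (rule sum_mono, rule mult_right_mono) (auto simp: Mge sw)
  have i2: "(\<Sum>u\<in>V. mn * (t u w' - s u)) \<le> (\<Sum>u\<in>V. \<mu> u * (t u w' - s u))"
    by (rule sum_mono, rule mult_right_mono) (auto simp: mnle sw)
  have e3: "(\<Sum>u\<in>V. M * (t u w - s u)) = M * (1 - \<Sigma>)"
    by (simp only: sum_distrib_left[symmetric] sum_subtractf s1 \<Sigma>_def)
  have e4: "(\<Sum>u\<in>V. mn * (t u w' - s u)) = mn * (1 - \<Sigma>)"
    by (simp only: sum_distrib_left[symmetric] sum_subtractf s2 \<Sigma>_def)
  have "(\<Sum>u\<in>V. \<mu> u * t u w) - (\<Sum>u\<in>V. \<mu> u * t u w') \<le> M * (1 - \<Sigma>) - mn * (1 - \<Sigma>)"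
    using e1 e2 i1 i2 e3 e4 by linarith
  also have "\<dots> = (M - mn) * (1 - \<Sigma>)" by (simp add: algebra_simps)
  also have "\<dots> \<le> Ob * (1 - \<Sigma>)" using Mmn S1 by (rule mult_right_mono)
  also have "\<dots> \<le> Ob * (1 - c)" using O0 cm unfolding \<Sigma>_def s_def by (intro mult_left_mono) auto
  finally show ?thesis .
qed

primrec levs :: "nat \<Rightarrow> (nat \<Rightarrow> nat) \<Rightarrow> nat \<Rightarrow> nat set" where
  "levs m par 0 = {0}"
| "levs m par (Suc d) = {j\<in>{1..m}. par j \<in> levs m par d}"




locale rtree2 = rtree +
  fixes n :: nat and b \<epsilon> :: real
  assumes dg: "n_eps_digraph n \<epsilon> V E" and pfm: "perfect_frac_matching V E x"
    and bn: "b_normal b n E x" and b2: "b \<ge> 2" and eps: "\<epsilon> > 0"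
begin

lemma cardV: "card V = n" using dg unfolding n_eps_digraph_def by auto
lemma npos: "n > 0" using cardV v0V finV by (metis card_gt_0_iff empty_iff)
lemma Vne: "V \<noteq> {}" using v0V by auto

lemma xnn: "e \<in> E \<Longrightarrow> x e \<ge> 0" using pfm unfolding perfect_frac_matching_def by auto
lemma xub: "e \<in> E \<Longrightarrow> x e \<le> b / n" using bn unfolding b_normal_def by auto
lemma xlb: "e \<in> E \<Longrightarrow> x e \<ge> 1 / (b * n)" using bn unfolding b_normal_def by auto
lemma xpos: "e \<in> E \<Longrightarrow> x e > 0"
proof -
  assume e: "e \<in> E"
  have "1 / (b * n) > 0" using b2 npos by simp
  then show ?thesis using xlb[OF e] by linarith
qed

lemma tt_nn: "tt k u w \<ge> 0"
  unfolding tt_def tree_trans_def using xnn by auto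

lemma tt_ub: "tt k u w \<le> b / n"
proof -
  have "b / n \<ge> 0" using b2 by simp
  then show ?thesis unfolding tt_def tree_trans_def using xub by auto
qed

lemma tt_col: assumes w: "w \<in> V" shows "(\<Sum>u\<in>V. tt k u w) = 1"
proof (cases "dir k")
  case True
  have "(\<Sum>u\<in>V. tt k u w) = (\<Sum>u\<in>V. if (u, w) \<in> E then x (u, w) else 0)"
    unfolding tt_def tree_trans_def using True by simp
  also have "\<dots> = (\<Sum>u\<in>in_nbrs V E w. x (u, w))"
    unfolding in_nbrs_def by (simp add: sum.inter_filter finV)
  also have "\<dots> = 1" using pfm w unfolding perfect_frac_matching_def by auto
  finally show ?thesis .
next
  case False
  have "(\<Sum>u\<in>V. tt k u w) = (\<Sum>u\<in>V. if (w, u) \<in> E then x (w, u) else 0)"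
    unfolding tt_def tree_trans_def using False by simp
  also have "\<dots> = (\<Sum>u\<in>out_nbrs V E w. x (w, u))"
    unfolding out_nbrs_def by (simp add: sum.inter_filter finV)
  also have "\<dots> = 1" using pfm w unfolding perfect_frac_matching_def by auto
  finally show ?thesis .
qed

lemma tt_le1: "tt k u w \<le> 1"
proof (cases "w \<in> V \<and> u \<in> V")
  case True
  then have "tt k u w \<le> (\<Sum>u\<in>V. tt k u w)"
    using finV by (intro member_le_sum) (auto simp: tt_nn)
  then show ?thesis using tt_col True by simp
next
  case False
  then have "tt k u w = 0" using tt_nz[of k u w] by blast
  then show ?thesis by simp
qed

lemma tt_big: assumes w: "w \<in> V"
  shows "real (card {u\<in>V. tt k u w \<ge> 1 / (b * n)}) \<ge> (1/2 + \<epsilon>) * n"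
proof -
  have deg: "real (card (in_nbrs V E w)) \<ge> (1/2 + \<epsilon>) * n"
    "real (card (out_nbrs V E w)) \<ge> (1/2 + \<epsilon>) * n"
    using dg w unfolding n_eps_digraph_def by auto
  show ?thesis
  proof (cases "dir k")
    case True
    have "in_nbrs V E w \<subseteq> {u\<in>V. tt k u w \<ge> 1 / (b * n)}"
      unfolding in_nbrs_def tt_def tree_trans_def using True xlb by auto
    then have "card (in_nbrs V E w) \<le> card {u\<in>V. tt k u w \<ge> 1 / (b * n)}"
      by (rule card_mono[rotated]) (simp add: finV)
    then show ?thesis using deg by linarith
  next
    case False
    have "out_nbrs V E w \<subseteq> {u\<in>V. tt k u w \<ge> 1 / (b * n)}"
      unfolding out_nbrs_def tt_def tree_trans_def using False xlb by auto
    then have "card (out_nbrs V E w) \<le> card {u\<in>V. tt k u w \<ge> 1 / (b * n)}"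
      by (rule card_mono[rotated]) (simp add: finV)
    then show ?thesis using deg by linarith
  qed
qed

lemma common: assumes w: "w \<in> V" and w': "w' \<in> V"
  shows "(\<Sum>u\<in>V. min (tt k u w) (tt k u w')) \<ge> 2 * \<epsilon> / b"
proof -
  define A where "A = {u\<in>V. tt k u w \<ge> 1 / (b * n)}"
  define A' where "A' = {u\<in>V. tt k u w' \<ge> 1 / (b * n)}"
  have fA: "finite A" "finite A'" unfolding A_def A'_def using finV by auto
  have "card (A \<union> A') \<le> card V" by (rule card_mono[OF finV]) (auto simp: A_def A'_def)
  then have cu: "real (card (A \<union> A')) \<le> n" using cardV by simp
  have ce: "real (card A) + real (card A') = real (card (A \<union> A')) + real (card (A \<inter> A'))"
    by (simp only: of_nat_add[symmetric] card_Un_Int[OF fA])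
  have cI0: "real (card A) + real (card A') - real n \<le> real (card (A \<inter> A'))"
    using cu ce by linarith
  have hh: "(1/2 + \<epsilon>) * n = n / 2 + \<epsilon> * n" by (simp add: algebra_simps)
  have cA: "real (card A) \<ge> (1/2 + \<epsilon>) * n" "real (card A') \<ge> (1/2 + \<epsilon>) * n"
    unfolding A_def A'_def using tt_big w w' by auto
  have cI: "real (card (A \<inter> A')) \<ge> 2 * \<epsilon> * n"
    using cI0 cA hh by linarith
  have "(\<Sum>u\<in>A \<inter> A'. 1 / (b * n)) \<le> (\<Sum>u\<in>A \<inter> A'. min (tt k u w) (tt k u w'))"
    by (rule sum_mono) (auto simp: A_def A'_def)
  also have "\<dots> \<le> (\<Sum>u\<in>V. min (tt k u w) (tt k u w'))"
    by (rule sum_mono2[OF finV]) (auto simp: A_def tt_nn)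
  finally have "real (card (A \<inter> A')) / (b * n) \<le> (\<Sum>u\<in>V. min (tt k u w) (tt k u w'))" by simp
  moreover have "2 * \<epsilon> / b \<le> real (card (A \<inter> A')) / (b * n)"
    using cI npos b2 by (simp add: field_simps)
  ultimately show ?thesis by linarith
qed

definition q where "q = 1 - 2 * \<epsilon> / b"

lemma osc: "j \<in> levs m par (Suc d) \<Longrightarrow> \<forall>u\<in>V. \<forall>w\<in>V. mu j u - mu j w \<le> b / n * q ^ d"
proof (induction d arbitrary: j)
  case 0
  then have j: "j \<in> {1..m}" by auto
  have "par j < j" using parlt j by blast
  then have pj: "par j \<le> m" using j by auto
  show ?case
  proof (intro ballI)
    fix u w assume u: "u \<in> V" and w: "w \<in> V"
    have "mu j u = (\<Sum>v\<in>V. mu (par j) v * tt j v u)" by (rule marginal[OF j u])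
    also have "\<dots> \<le> (\<Sum>v\<in>V. mu (par j) v * (b / n))"
      by (rule sum_mono, rule mult_left_mono) (auto simp: tt_ub mu_nonneg)
    also have "\<dots> = (\<Sum>v\<in>V. mu (par j) v) * (b / n)" by (rule sum_distrib_right[symmetric])
    also have "\<dots> = b / n" using mu_sum[OF pj] by simp
    finally show "mu j u - mu j w \<le> b / n * q ^ 0" using mu_nonneg[of j w] by simp
  qed
next
  case (Suc d)
  then have j: "j \<in> {1..m}" and pj: "par j \<in> levs m par (Suc d)" by auto
  have IH: "\<forall>u\<in>V. \<forall>w\<in>V. mu (par j) u - mu (par j) w \<le> b / n * q ^ d" using Suc.IH[OF pj] .
  show ?case
  proof (intro ballI)
    fix u w assume u: "u \<in> V" and w: "w \<in> V"
    have "mu j u - mu j w = (\<Sum>v\<in>V. mu (par j) v * tt j v u) - (\<Sum>v\<in>V. mu (par j) v * tt j v w)"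
      using marginal[OF j u] marginal[OF j w] by simp
    also have "\<dots> \<le> b / n * q ^ d * (1 - 2 * \<epsilon> / b)"
      by (rule dobrushin[OF finV Vne IH]) (auto simp: tt_nn tt_col u w common)
    also have "\<dots> = b / n * q ^ Suc d" by (simp add: q_def)
    finally show "mu j u - mu j w \<le> b / n * q ^ Suc d" .
  qed
qed

lemma mu_lb: assumes i: "i \<le> m" and Ob: "\<forall>u\<in>V. \<forall>w\<in>V. mu i u - mu i w \<le> Ob" and u: "u \<in> V"
  shows "mu i u \<ge> 1 / n - Ob"
proof -
  have "Max (mu i ` V) \<in> mu i ` V" using finV Vne by (intro Max_in) auto
  then obtain a where a1: "a \<in> V" "Max (mu i ` V) = mu i a" by blast
  have a: "a \<in> V" "\<forall>v\<in>V. mu i v \<le> mu i a"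
    using a1 finV by (auto simp flip: a1(2))
  have "(\<Sum>v\<in>V. mu i v) \<le> real (card V) * mu i a" by (rule sum_bounded_above) (use a in auto)
  then have "1 \<le> n * mu i a" using mu_sum[OF i] cardV by simp
  then have "1 / n \<le> mu i a" using npos by (simp add: field_simps)
  then show ?thesis using Ob u a by fastforce
qed

definition psi where "psi k u = (\<Sum>w\<in>V. tt k u w * (- log 2 (tt k u w)))"

lemma psi_nn: "psi k u \<ge> 0"
  unfolding psi_def
proof (rule sum_nonneg)
  fix w
  show "0 \<le> tt k u w * - log 2 (tt k u w)"
  proof (cases "tt k u w = 0")
    case False
    then have "tt k u w > 0" using tt_nn[of k u w] by linarith
    then have "log 2 (tt k u w) \<le> 0" using tt_le1 by simp
    then show ?thesis by (intro mult_nonneg_nonneg) (auto simp: tt_nn)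
  qed simp
qed

lemma psi_sum: "(\<Sum>u\<in>V. psi k u) = h_frac E x"
proof -
  have hf: "h_frac E x = (\<Sum>e\<in>E. x e * (- log 2 (x e)))"
    unfolding h_frac_def by (simp add: log_inverse flip: inverse_eq_divide)
  have fVV: "finite (V \<times> V)" using finV by simp
  have EVV: "{e \<in> V \<times> V. e \<in> E} = E" using EV by auto
  show ?thesis
  proof (cases "dir k")
    case True
    have "(\<Sum>u\<in>V. psi k u) = (\<Sum>u\<in>V. \<Sum>w\<in>V. if (u, w) \<in> E then x (u, w) * (- log 2 (x (u, w))) else 0)"
      unfolding psi_def tt_def tree_trans_def using True by (intro sum.cong refl) auto
    also have "\<dots> = (\<Sum>e\<in>V \<times> V. if e \<in> E then x e * (- log 2 (x e)) else 0)"
      by (simp add: sum.cartesian_product)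
    also have "\<dots> = (\<Sum>e\<in>E. x e * (- log 2 (x e)))"
      by (subst sum.inter_filter[OF fVV, symmetric]) (simp add: EVV)
    finally show ?thesis using hf by simp
  next
    case False
    have "(\<Sum>u\<in>V. psi k u) = (\<Sum>u\<in>V. \<Sum>w\<in>V. if (w, u) \<in> E then x (w, u) * (- log 2 (x (w, u))) else 0)"
      unfolding psi_def tt_def tree_trans_def using False by (intro sum.cong refl) auto
    also have "\<dots> = (\<Sum>w\<in>V. \<Sum>u\<in>V. if (w, u) \<in> E then x (w, u) * (- log 2 (x (w, u))) else 0)"
      by (rule sum.swap)
    also have "\<dots> = (\<Sum>e\<in>V \<times> V. if e \<in> E then x e * (- log 2 (x e)) else 0)"
      by (simp add: sum.cartesian_product)
    also have "\<dots> = (\<Sum>e\<in>E. x e * (- log 2 (x e)))"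
      by (subst sum.inter_filter[OF fVV, symmetric]) (simp add: EVV)
    finally show ?thesis using hf by simp
  qed
qed

definition X where "X k = (\<Sum>r\<in>set_pmf R. pmf R r * (- log 2 (tt k (r ! par k) (r ! k))))"

lemma X_eq: "k \<in> {1..m} \<Longrightarrow> X k = (\<Sum>u\<in>V. mu (par k) u * psi k u)"
  unfolding X_def psi_def by (rule lemB)

lemma X_nn: "k \<in> {1..m} \<Longrightarrow> X k \<ge> 0"
  by (simp add: X_eq sum_nonneg mu_nonneg psi_nn)

lemma X_lb:
  assumes k: "k \<in> {1..m}" and pk: "par k \<in> levs m par (Suc d)"
  shows "X k \<ge> h_frac E x / n * (1 - b * q ^ d)"
proof -
  have "par k < k" using parlt k by blast
  then have pkm: "par k \<le> m" using k by auto
  have lb: "mu (par k) u \<ge> 1 / n - b / n * q ^ d" if "u \<in> V" for u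
    by (rule mu_lb[OF pkm osc[OF pk] that])
  have "(\<Sum>u\<in>V. (1 / n - b / n * q ^ d) * psi k u) \<le> X k"
    unfolding X_eq[OF k] by (rule sum_mono, rule mult_right_mono, erule lb, rule psi_nn)
  moreover have "(\<Sum>u\<in>V. (1 / n - b / n * q ^ d) * psi k u) = h_frac E x / n * (1 - b * q ^ d)"
  proof -
    have "(\<Sum>u\<in>V. (1 / n - b / n * q ^ d) * psi k u) = (1 / n - b / n * q ^ d) * (\<Sum>u\<in>V. psi k u)"
      by (rule sum_distrib_left[symmetric])
    also have "\<dots> = h_frac E x / n * (1 - b * q ^ d)" using npos by (simp add: psi_sum field_simps)
    finally show ?thesis .
  qed
  ultimately show ?thesis by simp
qed

lemma entropy_X: "entropy2 R = (\<Sum>k\<in>{1..m}. X k)"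
  unfolding X_def by (rule entropy_decomp)

end



context rtree2 begin

lemma levs_sub: "levs m par d \<subseteq> {0..m}"
  by (induction d) auto

lemma levs_cover: "k \<le> m \<Longrightarrow> \<exists>d. k \<in> levs m par d"
proof (induction k rule: less_induct)
  case (less k)
  show ?case
  proof (cases "k = 0")
    case True then show ?thesis by (intro exI[of _ 0]) simp
  next
    case False
    then have k: "k \<in> {1..m}" using less.prems by auto
    then have "par k < k" using parlt by blast
    then obtain d where "par k \<in> levs m par d" using less.IH less.prems by force
    then have "k \<in> levs m par (Suc d)" using k by simp
    then show ?thesis by blast
  qed
qed

lemma levs_card:
  assumes D1: "\<Delta> \<ge> 1" and Dm: "real (tree_maxdeg m par) \<le> \<Delta>"
  shows "real (card (levs m par d)) \<le> \<Delta> ^ d"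
proof (induction d)
  case 0 then show ?case by simp
next
  case (Suc d)
  have eq: "levs m par (Suc d) = (\<Union>i\<in>levs m par d. {j\<in>{1..m}. par j = i})" by auto
  have fin: "finite (levs m par d)" using levs_sub finite_subset by blast
  have ch: "real (card {j\<in>{1..m}. par j = i}) \<le> \<Delta>" if i: "i \<in> levs m par d" for i
  proof -
    have im: "i \<in> {0..m}" using levs_sub i by blast
    have "card {j\<in>{1..m}. par j = i} \<le> tree_deg m par i" unfolding tree_deg_def by simp
    also have "\<dots> \<le> tree_maxdeg m par" unfolding tree_maxdeg_def using im by (intro Max_ge) auto
    finally show ?thesis using Dm by linarith
  qed
  have "card (levs m par (Suc d)) \<le> (\<Sum>i\<in>levs m par d. card {j\<in>{1..m}. par j = i})"
    unfolding eq by (rule card_UN_le[OF fin])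
  then have "real (card (levs m par (Suc d))) \<le> (\<Sum>i\<in>levs m par d. real (card {j\<in>{1..m}. par j = i}))"
    by (metis of_nat_le_iff of_nat_sum)
  also have "\<dots> \<le> (\<Sum>i\<in>levs m par d. \<Delta>)" by (rule sum_mono) (rule ch)
  also have "\<dots> = real (card (levs m par d)) * \<Delta>" by simp
  also have "\<dots> \<le> \<Delta> ^ d * \<Delta>" using Suc.IH D1 by (intro mult_right_mono) auto
  finally show ?case by (simp add: mult.commute)
qed

lemma h_nn: "h_frac E x \<ge> 0"
  using psi_sum[of 0] psi_nn by (metis sum_nonneg)

lemma main_bound:
  assumes D1: "\<Delta> \<ge> 1" and Dm: "real (tree_maxdeg m par) \<le> \<Delta>" and e1: "\<epsilon> \<le> 1"
    and qD: "b * q ^ D \<le> 1"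
  shows "entropy2 R \<ge> (real m - (real D + 2) * \<Delta> ^ (D + 1)) * (h_frac E x / n * (1 - b * q ^ D))"
proof -
  define Y where "Y = h_frac E x / n * (1 - b * q ^ D)"
  have Y0: "Y \<ge> 0" unfolding Y_def using h_nn qD by simp
  define Bad where "Bad = {1..m} \<inter> (\<Union>d\<in>{..D+1}. levs m par d)"
  define Good where "Good = {1..m} - Bad"
  have q0: "q \<ge> 0" "q \<le> 1" unfolding q_def using b2 e1 eps by (auto simp: field_simps)
  have good: "X k \<ge> Y" if k: "k \<in> Good" for k
  proof -
    have k1: "k \<in> {1..m}" "k \<notin> Bad" using k unfolding Good_def by auto
    obtain e where e: "k \<in> levs m par e" using levs_cover k1 by force
    have "e \<noteq> 0" using e k1 by (cases e) auto
    then obtain e' where e': "e = Suc e'" by (cases e) auto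
    have pk: "par k \<in> levs m par e'" using e e' by simp
    have "e > D + 1" using e k1 unfolding Bad_def by force
    then obtain d where d: "e' = Suc d" "d \<ge> D" using e' by (cases e') auto
    have "X k \<ge> h_frac E x / n * (1 - b * q ^ d)" using X_lb[OF k1(1)] pk d by simp
    moreover have "q ^ d \<le> q ^ D" using q0 d by (intro power_decreasing) auto
    then have "h_frac E x / n * (1 - b * q ^ D) \<le> h_frac E x / n * (1 - b * q ^ d)"
      using h_nn b2 by (intro mult_left_mono) auto
    ultimately show ?thesis unfolding Y_def by linarith
  qed
  have finB: "finite Bad" unfolding Bad_def by simp
  have "card Bad \<le> card (\<Union>d\<in>{..D+1}. levs m par d)" unfolding Bad_def
    by (rule card_mono) (auto intro: finite_subset[OF levs_sub])
  also have "\<dots> \<le> (\<Sum>d\<in>{..D+1}. card (levs m par d))" by (rule card_UN_le) simp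
  finally have "real (card Bad) \<le> (\<Sum>d\<in>{..D+1}. real (card (levs m par d)))"
    by (metis of_nat_le_iff of_nat_sum)
  also have "\<dots> \<le> (\<Sum>d\<in>{..D+1}. \<Delta> ^ (D + 1))"
  proof (rule sum_mono)
    fix d assume "d \<in> {..D+1}"
    then have "\<Delta> ^ d \<le> \<Delta> ^ (D + 1)" using D1 by (intro power_increasing) auto
    then show "real (card (levs m par d)) \<le> \<Delta> ^ (D + 1)" using levs_card[OF D1 Dm, of d] by linarith
  qed
  also have "\<dots> = (real D + 2) * \<Delta> ^ (D + 1)" by simp
  finally have cB: "real (card Bad) \<le> (real D + 2) * \<Delta> ^ (D + 1)" .
  have BS: "Bad \<subseteq> {1..m}" unfolding Bad_def by auto
  have "card Good = m - card Bad" unfolding Good_def using finB BS by (simp add: card_Diff_subset)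
  moreover have "card Bad \<le> m" using card_mono[OF _ BS] by simp
  ultimately have "real (card Good) + real (card Bad) = real m" by simp
  then have cG: "real (card Good) \<ge> real m - (real D + 2) * \<Delta> ^ (D + 1)" using cB by linarith
  have "entropy2 R = (\<Sum>k\<in>{1..m}. X k)" by (rule entropy_X)
  also have "\<dots> \<ge> (\<Sum>k\<in>Good. X k)"
    by (rule sum_mono2) (auto simp: Good_def X_nn)
  also have "(\<Sum>k\<in>Good. X k) \<ge> (\<Sum>k\<in>Good. Y)" by (rule sum_mono) (rule good)
  also have "(\<Sum>k\<in>Good. Y) = real (card Good) * Y" by simp
  also have "real (card Good) * Y \<ge> (real m - (real D + 2) * \<Delta> ^ (D + 1)) * Y"
    using cG Y0 by (rule mult_right_mono)
  finally show ?thesis unfolding Y_def by simp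
qed

end



lemma asym:
  fixes \<epsilon> b \<gamma> s c K :: real and D :: nat
  assumes cdef: "c = 2 * \<epsilon> / b" and e: "0 < \<epsilon>" "\<epsilon> \<le> 1" and b: "b \<ge> 2"
    and g: "0 < \<gamma>" "\<gamma> \<le> c / 16"
    and Kdef: "K = 1 + 1 / c + (ln b + 3) / 16 + ln b / c + 3"
    and s: "s \<ge> 16 * K / 3 + 1"
    and Ddef: "D = nat \<lceil>(s + ln b) / c\<rceil>"
  shows "b * (1 - c) ^ D \<le> exp (- s)"
    and "(real D + 2) * exp (\<gamma> * s) ^ (D + 1) \<le> exp (s * s / 4 - s)"
proof -
  have c0a: "0 < c" unfolding cdef using e b by simp
  have "2 * \<epsilon> \<le> b" using e b by linarith
  then have c0b: "c \<le> 1" unfolding cdef using b by (simp add: divide_le_eq)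
  note c0 = c0a c0b
  have lb: "ln b > 0" using b by simp
  have K0: "K \<ge> 0" using Kdef c0 lb by simp
  have s1: "s \<ge> 1" using s K0 by linarith
  define y where "y = (s + ln b) / c"
  have y0: "y \<ge> 0" unfolding y_def using s1 lb c0 by simp
  have Dy: "y \<le> real D" unfolding Ddef y_def by (rule real_nat_ceiling_ge)
  have Dy2: "real D \<le> y + 1"
  proof -
    have "real D = of_int \<lceil>y\<rceil>" unfolding Ddef y_def[symmetric] using y0 by simp
    also have "\<dots> \<le> y + 1" by (rule of_int_ceiling_le_add_one)
    finally show ?thesis .
  qed
  have yc: "y * c = s + ln b" unfolding y_def using c0 by simp
  have "(1 - c) ^ D \<le> exp (- c) ^ D"
    using exp_ge_add_one_self[of "-c"] c0 by (intro power_mono) auto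
  also have "\<dots> = exp (real D * (- c))" by (rule exp_of_nat_mult[symmetric])
  also have "\<dots> \<le> exp (- (s + ln b))"
  proof -
    have "y * c \<le> real D * c" using Dy c0 by (intro mult_right_mono) auto
    then show ?thesis using yc by simp
  qed
  also have "\<dots> = exp (- s) / b" using b by (simp add: exp_diff exp_minus field_simps)
  finally show "b * (1 - c) ^ D \<le> exp (- s)" using b by (simp add: field_simps)
  define T where "T = y + 3"
  have DT: "real D + 2 \<le> T" using Dy2 unfolding T_def by simp
  have DT1: "real (D + 1) \<le> T" using Dy2 unfolding T_def by simp
  have gs: "\<gamma> * s \<ge> 0" using g s1 by simp
  have "exp (\<gamma> * s) ^ (D + 1) = exp (real (D + 1) * (\<gamma> * s))" by (rule exp_of_nat_mult[symmetric])
  also have "\<dots> \<le> exp (T * (\<gamma> * s))" using DT1 gs by (simp add: mult_right_mono)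
  finally have P1: "exp (\<gamma> * s) ^ (D + 1) \<le> exp (T * (\<gamma> * s))" .
  have "T \<le> exp T" using exp_ge_add_one_self[of T] by linarith
  then have P2: "real D + 2 \<le> exp T" using DT by linarith
  have "(real D + 2) * exp (\<gamma> * s) ^ (D + 1) \<le> exp T * exp (T * (\<gamma> * s))"
    using P1 P2 by (intro mult_mono) auto
  also have "\<dots> = exp (T + T * (\<gamma> * s))" by (simp add: exp_add)
  also have "\<dots> \<le> exp (s * s / 4 - s)"
  proof -
    have T0: "T \<ge> 0" unfolding T_def using y0 by simp
    have a1: "T * (\<gamma> * s) \<le> T * (c / 16 * s)" using T0 g s1 by (intro mult_left_mono) auto
    have a2: "T * (c / 16 * s) = (s * s + s * ln b) / 16 + 3 * (c * s) / 16"
      unfolding T_def y_def using c0 by (simp add: field_simps)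
    have a3: "c * s \<le> s" using c0 s1 by simp
    have a4: "T = s / c + ln b / c + 3" unfolding T_def y_def by (simp add: add_divide_distrib)
    have nn: "ln b / c + 3 \<ge> 0" using lb c0 by simp
    have "1 * (ln b / c + 3) \<le> s * (ln b / c + 3)" by (rule mult_right_mono[OF s1 nn])
    then have a5: "ln b / c + 3 \<le> s * (ln b / c + 3)" by simp
    have a6: "s * K = s + s / c + s * ln b / 16 + 3 * s / 16 + s * (ln b / c + 3)"
      unfolding Kdef by (simp add: field_simps)
    have a7: "s * K \<le> s * (3 * s / 16)" using s s1 by (intro mult_left_mono) auto
    have "T + T * (\<gamma> * s) \<le> s * s / 4 - s"
      using a1 a2 a3 a4 a5 a6 a7 by (simp add: field_simps)
    then show ?thesis by simp
  qed
  finally show "(real D + 2) * exp (\<gamma> * s) ^ (D + 1) \<le> exp (s * s / 4 - s)" .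
qed




theorem theorem6p2:
  "\<forall>\<epsilon>::real. 0 < \<epsilon> \<and> \<epsilon> \<le> 1 \<longrightarrow>
    (\<exists>b0::real. \<forall>b\<ge>b0. \<exists>\<gamma>0::real. \<gamma>0 > 0 \<and>
      (\<forall>\<gamma>. 0 < \<gamma> \<and> \<gamma> \<le> \<gamma>0 \<longrightarrow>
        (\<exists>n0::nat. \<forall>n\<ge>n0.
          \<forall>V E (x :: nat \<times> nat \<Rightarrow> real) v0 m par dir (R :: nat list pmf).
            let \<Delta> = exp (\<gamma> * sqrt (ln (real n))) in
            n_eps_digraph n \<epsilon> V E \<longrightarrow>
            perfect_frac_matching V E x \<longrightarrow> b_normal b n E x \<longrightarrow>
            v0 \<in> V \<longrightarrow>
            bfs_tree m par \<longrightarrow>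
            real n powr (1/4) + 1 \<le> real (m + 1) \<longrightarrow>
            real (m + 1) \<le> 3 * \<Delta> * real n powr (1/4) \<longrightarrow>
            real (tree_maxdeg m par) \<le> \<Delta> \<longrightarrow>
            random_tree E x m par dir v0 R \<longrightarrow>
            entropy2 R \<ge> (1 - 2 * exp (- sqrt (ln (real n)))) * (real m / real n) * h_frac E x)))"
proof (intro allI impI)
  fix \<epsilon> :: real assume e: "0 < \<epsilon> \<and> \<epsilon> \<le> 1"
  show "\<exists>b0::real. \<forall>b\<ge>b0. \<exists>\<gamma>0::real. \<gamma>0 > 0 \<and>
      (\<forall>\<gamma>. 0 < \<gamma> \<and> \<gamma> \<le> \<gamma>0 \<longrightarrow>
        (\<exists>n0::nat. \<forall>n\<ge>n0.
          \<forall>V E (x :: nat \<times> nat \<Rightarrow> real) v0 m par dir (R :: nat list pmf).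
            let \<Delta> = exp (\<gamma> * sqrt (ln (real n))) in
            n_eps_digraph n \<epsilon> V E \<longrightarrow>
            perfect_frac_matching V E x \<longrightarrow> b_normal b n E x \<longrightarrow>
            v0 \<in> V \<longrightarrow>
            bfs_tree m par \<longrightarrow>
            real n powr (1/4) + 1 \<le> real (m + 1) \<longrightarrow>
            real (m + 1) \<le> 3 * \<Delta> * real n powr (1/4) \<longrightarrow>
            real (tree_maxdeg m par) \<le> \<Delta> \<longrightarrow>
            random_tree E x m par dir v0 R \<longrightarrow>
            entropy2 R \<ge> (1 - 2 * exp (- sqrt (ln (real n)))) * (real m / real n) * h_frac E x))"
  proof (rule exI[of _ "2::real"], intro allI impI)
    fix b :: real assume b: "b \<ge> 2"
    define c where "c = 2 * \<epsilon> / b"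
    have c0: "c > 0" unfolding c_def using e b by simp
    define K where "K = 1 + 1 / c + (ln b + 3) / 16 + ln b / c + 3"
    show "\<exists>\<gamma>0::real. \<gamma>0 > 0 \<and>
      (\<forall>\<gamma>. 0 < \<gamma> \<and> \<gamma> \<le> \<gamma>0 \<longrightarrow>
        (\<exists>n0::nat. \<forall>n\<ge>n0.
          \<forall>V E (x :: nat \<times> nat \<Rightarrow> real) v0 m par dir (R :: nat list pmf).
            let \<Delta> = exp (\<gamma> * sqrt (ln (real n))) in
            n_eps_digraph n \<epsilon> V E \<longrightarrow>
            perfect_frac_matching V E x \<longrightarrow> b_normal b n E x \<longrightarrow>
            v0 \<in> V \<longrightarrow>
            bfs_tree m par \<longrightarrow>
            real n powr (1/4) + 1 \<le> real (m + 1) \<longrightarrow>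
            real (m + 1) \<le> 3 * \<Delta> * real n powr (1/4) \<longrightarrow>
            real (tree_maxdeg m par) \<le> \<Delta> \<longrightarrow>
            random_tree E x m par dir v0 R \<longrightarrow>
            entropy2 R \<ge> (1 - 2 * exp (- sqrt (ln (real n)))) * (real m / real n) * h_frac E x))"
    proof (rule exI[of _ "c / 16"], intro conjI allI impI)
      show "c / 16 > 0" using c0 by simp
      fix \<gamma> :: real assume g: "0 < \<gamma> \<and> \<gamma> \<le> c / 16"
      define N0 where "N0 = nat \<lceil>exp ((16 * K / 3 + 1)\<^sup>2)\<rceil> + 1"
      show "\<exists>n0::nat. \<forall>n\<ge>n0.
          \<forall>V E (x :: nat \<times> nat \<Rightarrow> real) v0 m par dir (R :: nat list pmf).
            let \<Delta> = exp (\<gamma> * sqrt (ln (real n))) in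
            n_eps_digraph n \<epsilon> V E \<longrightarrow>
            perfect_frac_matching V E x \<longrightarrow> b_normal b n E x \<longrightarrow>
            v0 \<in> V \<longrightarrow>
            bfs_tree m par \<longrightarrow>
            real n powr (1/4) + 1 \<le> real (m + 1) \<longrightarrow>
            real (m + 1) \<le> 3 * \<Delta> * real n powr (1/4) \<longrightarrow>
            real (tree_maxdeg m par) \<le> \<Delta> \<longrightarrow>
            random_tree E x m par dir v0 R \<longrightarrow>
            entropy2 R \<ge> (1 - 2 * exp (- sqrt (ln (real n)))) * (real m / real n) * h_frac E x"
      proof (rule exI[of _ N0], rule allI, rule impI)
        fix n :: nat assume n: "n \<ge> N0"
        have nbig: "real n \<ge> exp ((16 * K / 3 + 1)\<^sup>2)"
        proof -
          have "exp ((16 * K / 3 + 1)\<^sup>2) \<le> real (nat \<lceil>exp ((16 * K / 3 + 1)\<^sup>2)\<rceil>)"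
            by (rule real_nat_ceiling_ge)
          also have "\<dots> \<le> real n" using n unfolding N0_def by simp
          finally show ?thesis .
        qed
        have npos: "real n > 0" using nbig by (meson exp_gt_zero less_le_trans)
        define L where "L = ln (real n)"
        define s where "s = sqrt L"
        have K0: "K \<ge> 0" unfolding K_def using c0 b by simp
        have hL: "(16 * K / 3 + 1)\<^sup>2 \<le> L" unfolding L_def using nbig npos
          by (metis exp_le_cancel_iff exp_ln)
        then have sK: "s \<ge> 16 * K / 3 + 1" unfolding s_def using K0
          by (metis real_le_rsqrt add_nonneg_nonneg divide_nonneg_pos mult_nonneg_nonneg
              zero_le_numeral zero_le_one zero_less_numeral)
        have s1: "s \<ge> 1" using sK K0 by linarith
        have L0: "L \<ge> 0" using hL by (metis zero_le_power2 order_trans)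
        have ss: "s * s = L" unfolding s_def using L0 by simp
        show "\<forall>V E (x :: nat \<times> nat \<Rightarrow> real) v0 m par dir (R :: nat list pmf).
            let \<Delta> = exp (\<gamma> * sqrt (ln (real n))) in
            n_eps_digraph n \<epsilon> V E \<longrightarrow>
            perfect_frac_matching V E x \<longrightarrow> b_normal b n E x \<longrightarrow>
            v0 \<in> V \<longrightarrow>
            bfs_tree m par \<longrightarrow>
            real n powr (1/4) + 1 \<le> real (m + 1) \<longrightarrow>
            real (m + 1) \<le> 3 * \<Delta> * real n powr (1/4) \<longrightarrow>
            real (tree_maxdeg m par) \<le> \<Delta> \<longrightarrow>
            random_tree E x m par dir v0 R \<longrightarrow>
            entropy2 R \<ge> (1 - 2 * exp (- sqrt (ln (real n)))) * (real m / real n) * h_frac E x"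
          unfolding Let_def
        proof (intro allI impI)
          fix V E and x :: "nat \<times> nat \<Rightarrow> real" and v0 m par dir and R :: "nat list pmf"
          assume dg: "n_eps_digraph n \<epsilon> V E" and pfm: "perfect_frac_matching V E x"
            and bn: "b_normal b n E x" and v0: "v0 \<in> V" and bfs: "bfs_tree m par"
            and mlb: "real n powr (1/4) + 1 \<le> real (m + 1)"
            and mub: "real (m + 1) \<le> 3 * exp (\<gamma> * sqrt (ln (real n))) * real n powr (1/4)"
            and md: "real (tree_maxdeg m par) \<le> exp (\<gamma> * sqrt (ln (real n)))"
            and rt: "random_tree E x m par dir v0 R"
          interpret rtree2 V E x m par dir v0 R n b \<epsilon>
          proof
            show "random_tree E x m par dir v0 R" by (rule rt)
            show "E \<subseteq> V \<times> V" "finite V" using dg unfolding n_eps_digraph_def digraph_def by auto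
            show "v0 \<in> V" by (rule v0)
            show "\<forall>j\<in>{1..m}. par j < j" using bfs unfolding bfs_tree_def by auto
            show "n_eps_digraph n \<epsilon> V E" "perfect_frac_matching V E x" "b_normal b n E x" "2 \<le> b" "0 < \<epsilon>"
              using dg pfm bn b e by auto
          qed
          define D where "D = nat \<lceil>(s + ln b) / c\<rceil>"
          define \<Delta> where "\<Delta> = exp (\<gamma> * s)"
          have qc: "q = 1 - c" unfolding q_def c_def by simp
          have A1: "b * q ^ D \<le> exp (- s)" unfolding qc
            by (rule asym(1)[of c \<epsilon> b \<gamma> K s D, OF c_def _ _ b _ _ K_def sK D_def]) (use e g in auto)
          have A2: "(real D + 2) * \<Delta> ^ (D + 1) \<le> exp (s * s / 4 - s)" unfolding \<Delta>_def
            by (rule asym(2)[of c \<epsilon> b \<gamma> K s D, OF c_def _ _ b _ _ K_def sK D_def]) (use e g in auto)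
          have D1: "\<Delta> \<ge> 1" unfolding \<Delta>_def using g s1 by simp
          have Dm: "real (tree_maxdeg m par) \<le> \<Delta>" using md unfolding \<Delta>_def s_def L_def .
          define t where "t = exp (- s)"
          have t0: "t > 0" "t \<le> 1" unfolding t_def using s1 by auto
          have qD: "b * q ^ D \<le> 1" using A1 t0 unfolding t_def by linarith
          have MB: "entropy2 R \<ge> (real m - (real D + 2) * \<Delta> ^ (D + 1)) * (h_frac E x / n * (1 - b * q ^ D))"
            by (rule main_bound[OF D1 Dm _ qD]) (use e in auto)
          have pw: "real n powr (1/4) = exp (L / 4)" unfolding L_def using npos
            by (simp add: powr_def)
          have mge: "real m \<ge> exp (L / 4)" using mlb pw by simp
          have "exp (s * s / 4 - s) = exp (L / 4 + - s)" by (simp add: ss)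
          also have "\<dots> = exp (L / 4) * t" unfolding t_def by (rule exp_add)
          also have "\<dots> \<le> real m * t" using mge t0 by (intro mult_right_mono) auto
          finally have Sb: "(real D + 2) * \<Delta> ^ (D + 1) \<le> real m * t" using A2 by linarith
          have q0: "q \<ge> 0" unfolding qc c_def using e b by (simp add: divide_le_eq)
          have beta0: "b * q ^ D \<ge> 0" using b q0 by simp
          have h0: "h_frac E x / n \<ge> 0" using h_nn npos by simp
          have f1: "real m - (real D + 2) * \<Delta> ^ (D + 1) \<ge> real m * (1 - t)" using Sb by (simp add: algebra_simps)
          have f2: "1 - b * q ^ D \<ge> 1 - t" using A1 unfolding t_def by simp
          have m0: "real m * (1 - t) \<ge> 0" using t0 by simp
          have "(real m * (1 - t)) * (1 - t) \<le> (real m - (real D + 2) * \<Delta> ^ (D + 1)) * (1 - b * q ^ D)"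
            using f1 f2 m0 t0 by (intro mult_mono) linarith+
          moreover have "real m * (1 - 2 * t) \<le> (real m * (1 - t)) * (1 - t)"
          proof -
            have "(real m * (1 - t)) * (1 - t) = real m * (1 - 2 * t) + real m * (t * t)" by (simp add: algebra_simps)
            moreover have "real m * (t * t) \<ge> 0" by simp
            ultimately show ?thesis by linarith
          qed
          ultimately have F: "real m * (1 - 2 * t) \<le> (real m - (real D + 2) * \<Delta> ^ (D + 1)) * (1 - b * q ^ D)"
            by linarith
          have "(1 - 2 * t) * (real m / real n) * h_frac E x = (real m * (1 - 2 * t)) * (h_frac E x / n)"
            by (simp add: field_simps)
          also have "\<dots> \<le> ((real m - (real D + 2) * \<Delta> ^ (D + 1)) * (1 - b * q ^ D)) * (h_frac E x / n)"
            using F h0 by (rule mult_right_mono)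
          also have "\<dots> = (real m - (real D + 2) * \<Delta> ^ (D + 1)) * (h_frac E x / n * (1 - b * q ^ D))"
            by (simp add: algebra_simps)
          also have "\<dots> \<le> entropy2 R" by (rule MB)
          finally show "entropy2 R \<ge> (1 - 2 * exp (- sqrt (ln (real n)))) * (real m / real n) * h_frac E x"
            unfolding t_def s_def L_def .
        qed
      qed
    qed
  qed
qed


end
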